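(* Let $\alpha,\beta,\sigma>0$ and let $X\sim\mathcal{N}(\alpha,\sigma^2)$. Then $$\mathbb{E}\left[\tanh\left(\frac{\beta X}{\sigma^2}\right)\right]\ge 1-\exp\left(-\frac{\min(\alpha,\beta)\cdot\alpha}{2\sigma^2}\right).$$ *)

theory Defs
  imports "HOL-Probability.Probability"
begin

end

theory Submission imports Defs begin

lemma nd_exp:
  assumes "\<sigma> > 0"
  shows "normal_density \<mu> \<sigma> x * exp (- k * x)
     = exp (- k * \<mu> + k\<^sup>2 * \<sigma>\<^sup>2 / 2) * normal_density (\<mu> - k * \<sigma>\<^sup>2) \<sigma> x"
proof -
  have "- (x - \<mu>)\<^sup>2 / (2 * \<sigma>\<^sup>2) + - k * x
      = - k * \<mu> + k\<^sup>2 * \<sigma>\<^sup>2 / 2 + - (x - (\<mu> - k * \<sigma>\<^sup>2))\<^sup>2 / (2 * \<sigma>\<^sup>2)"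
    using assms by (simp add: field_simps power2_eq_square)
  then show ?thesis unfolding normal_density_def
    by (simp add: exp_add[symmetric] mult_ac)
qed

lemma nd_mgf:
  assumes "\<sigma> > 0"
  shows "(\<integral>x. normal_density \<mu> \<sigma> x * exp (- k * x) \<partial>lborel) = exp (- k * \<mu> + k\<^sup>2 * \<sigma>\<^sup>2 / 2)"
  and "integrable lborel (\<lambda>x. normal_density \<mu> \<sigma> x * exp (- k * x))"
  unfolding nd_exp[OF assms] using assms by simp_all

lemma nd_bounded_integrable:
  fixes g :: "real \<Rightarrow> real"
  assumes [measurable]: "g \<in> borel_measurable borel" and b: "\<And>x. \<bar>g x\<bar> \<le> B" and s: "\<sigma> > 0"
  shows "integrable lborel (\<lambda>x. normal_density \<mu> \<sigma> x * g x)"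
proof (rule Bochner_Integration.integrable_bound[of lborel "\<lambda>x. B * normal_density \<mu> \<sigma> x"])
  show "integrable lborel (\<lambda>x. B * normal_density \<mu> \<sigma> x)" using s by simp
  show "AE x in lborel. norm (normal_density \<mu> \<sigma> x * g x) \<le> norm (B * normal_density \<mu> \<sigma> x)"
  proof (intro AE_I2)
    fix x
    have "\<bar>normal_density \<mu> \<sigma> x * g x\<bar> = normal_density \<mu> \<sigma> x * \<bar>g x\<bar>" by (simp add: abs_mult)
    also have "\<dots> \<le> normal_density \<mu> \<sigma> x * B" by (rule mult_left_mono[OF b]) simp
    also have "\<dots> \<le> normal_density \<mu> \<sigma> x * \<bar>B\<bar>" by (rule mult_left_mono) auto
    also have "\<dots> = \<bar>B * normal_density \<mu> \<sigma> x\<bar>" by (simp add: abs_mult)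
    finally show "norm (normal_density \<mu> \<sigma> x * g x) \<le> norm (B * normal_density \<mu> \<sigma> x)" by simp
  qed
qed measurable

lemma tanh_g: "tanh (t::real) = 1 - 2 / (1 + exp (2 * t))"
proof -
  have e: "exp (2*t) = exp t * exp t" by (simp add: exp_add[symmetric])
  have p: "exp t > 0" by simp
  have "tanh t = (exp t - exp (-t)) / (exp t + exp (-t))" by (rule tanh_altdef)
  also have "\<dots> = (exp t * exp t - 1) / (exp t * exp t + 1)"
    using p by (simp add: exp_minus divide_simps)
  also have "\<dots> = 1 - 2 / (1 + exp (2 * t))" unfolding e
  proof -
    have "1 + exp t * exp t > 0" using p by (simp add: add_pos_nonneg)
    then show "(exp t * exp t - 1) / (exp t * exp t + 1) = 1 - 2 / (1 + exp t * exp t)"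
      by (simp add: field_simps)
  qed
  finally show ?thesis .
qed

lemma g_le1: "2 / (1 + exp (2 * t)) \<le> exp (- (t::real))"
proof -
  have e: "exp (2*t) = exp t * exp t" by (simp add: exp_add[symmetric])
  have p: "exp t > 0" by simp
  have "0 \<le> (exp t - 1)\<^sup>2" by simp
  hence "2 * exp t \<le> 1 + exp t * exp t" by (simp add: power2_eq_square algebra_simps)
  thus ?thesis unfolding e exp_minus using p
    by (simp add: field_simps add_pos_pos)
qed

lemma g_pair:
  fixes c r x :: real
  assumes "r \<le> 2 * c" "r \<ge> 0"
  shows "2 / (1 + exp (2 * c * x)) + exp (- 2 * r * x) * (2 / (1 + exp (2 * c * (- x))))
         \<le> 2 * exp (- r * x)"
proof -
  define a where "a = exp (- r * x)"
  define b where "b = exp (2 * c * x)"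
  have a: "a > 0" and b: "b > 0" unfolding a_def b_def by auto
  have e1: "exp (- 2 * r * x) = a * a" unfolding a_def by (simp add: exp_add[symmetric])
  have e2: "exp (2 * c * (- x)) = 1 / b" unfolding b_def by (simp add: exp_minus inverse_eq_divide)
  have ab: "a * b = exp ((2*c - r) * x)" unfolding a_def b_def by (simp add: exp_add[symmetric] algebra_simps)
  have key: "(a - 1) * (1 - a * b) \<ge> 0"
  proof (cases "x \<ge> 0")
    case True
    have "a \<le> 1" unfolding a_def using True assms by simp
    moreover have "a * b \<ge> 1" unfolding ab using True assms by simp
    ultimately show ?thesis by (simp add: mult_nonpos_nonpos)
  next
    case False
    have "a \<ge> 1" unfolding a_def using False assms
      by (simp add: mult_nonneg_nonpos)
    moreover have "a * b \<le> 1" unfolding ab using False assms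
      by (simp add: mult_nonneg_nonpos)
    ultimately show ?thesis by simp
  qed
  have "2 / (1 + b) + a * a * (2 / (1 + 1 / b)) \<le> 2 * a"
  proof -
    have "2 / (1 + 1 / b) = 2 * b / (1 + b)" using b by (simp add: field_simps)
    moreover have "2 / (1 + b) + a * a * (2 * b / (1 + b)) \<le> 2 * a"
    proof -
      have bb: "1 + b > 0" using b by simp
      have "2 / (1 + b) + a * a * (2 * b / (1 + b)) = 2 * (1 + a * a * b) / (1 + b)"
        by (simp add: add_divide_distrib[symmetric] algebra_simps)
      also have "\<dots> \<le> 2 * a" using bb key
        by (simp add: divide_le_eq algebra_simps)
      finally show ?thesis .
    qed
    ultimately show ?thesis by simp
  qed
  thus ?thesis unfolding e1 e2 by (simp add: a_def b_def)
qed

lemma nd_reflect: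
  assumes "\<sigma> > 0"
  shows "normal_density \<alpha> \<sigma> (- x) = normal_density \<alpha> \<sigma> x * exp (- 2 * (\<alpha> / \<sigma>\<^sup>2) * x)"
proof -
  have "- (- x - \<alpha>)\<^sup>2 / (2 * \<sigma>\<^sup>2) = - (x - \<alpha>)\<^sup>2 / (2 * \<sigma>\<^sup>2) + - 2 * (\<alpha> / \<sigma>\<^sup>2) * x"
    using assms by (simp add: field_simps power2_eq_square)
  then show ?thesis unfolding normal_density_def
    by (simp add: exp_add[symmetric] mult_ac)
qed

theorem lemma2:
  fixes M :: "'a measure" and X :: "'a \<Rightarrow> real" and \<alpha> \<beta> \<sigma> :: real
  assumes "prob_space M"
    and "distributed M lborel X (normal_density \<alpha> \<sigma>)"
    and "\<alpha> > 0" and "\<beta> > 0" and "\<sigma> > 0"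
  shows "prob_space.expectation M (\<lambda>\<omega>. tanh (\<beta> * X \<omega> / \<sigma>\<^sup>2))
           \<ge> 1 - exp (- (min \<alpha> \<beta> * \<alpha>) / (2 * \<sigma>\<^sup>2))"
proof -
  note D = assms(2)
  have s: "\<sigma> > 0" and a: "\<alpha> > 0" and b: "\<beta> > 0" using assms by auto
  have s2: "\<sigma>\<^sup>2 > 0" using s by simp
  define c where "c = \<beta> / \<sigma>\<^sup>2"
  have c: "c > 0" unfolding c_def using b s2 by simp
  define \<phi> where "\<phi> = normal_density \<alpha> \<sigma>"
  define g where "g x = 2 / (1 + exp (2 * c * x))" for x :: real
  have [measurable]: "g \<in> borel_measurable borel" unfolding g_def[abs_def] by measurable
  have gb: "\<bar>g x\<bar> \<le> 2" for x
  proof -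
    have "1 \<le> 1 + exp (2 * c * x)" by simp
    moreover have "0 < 1 + exp (2 * c * x)" by (simp add: add_pos_pos)
    ultimately show ?thesis unfolding g_def by (simp add: divide_le_eq)
  qed
  have intg: "integrable lborel (\<lambda>x. \<phi> x * g x)"
    unfolding \<phi>_def by (rule nd_bounded_integrable[OF _ gb s]) measurable
  have tg: "tanh (\<beta> * x / \<sigma>\<^sup>2) = 1 - g x" for x
    unfolding g_def tanh_g c_def by (simp add: mult_ac)
  have E: "prob_space.expectation M (\<lambda>\<omega>. tanh (\<beta> * X \<omega> / \<sigma>\<^sup>2))
       = (\<integral>x. \<phi> x * tanh (\<beta> * x / \<sigma>\<^sup>2) \<partial>lborel)"
  proof -
    have "(\<lambda>x. tanh (\<beta> * x / \<sigma>\<^sup>2)) = (\<lambda>x. 1 - g x)" by (simp add: tg)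
    moreover have "(\<lambda>x. 1 - g x) \<in> borel_measurable borel" by measurable
    ultimately have "(\<lambda>x. tanh (\<beta> * x / \<sigma>\<^sup>2)) \<in> borel_measurable lborel" by simp
    then show ?thesis
      unfolding \<phi>_def by (rule distributed_integral[OF D, symmetric]) auto
  qed
  also have "\<dots> = (\<integral>x. \<phi> x - \<phi> x * g x \<partial>lborel)"
    unfolding tg by (simp add: algebra_simps)
  also have "\<dots> = 1 - (\<integral>x. \<phi> x * g x \<partial>lborel)"
    using intg s unfolding \<phi>_def by (subst Bochner_Integration.integral_diff) auto
  finally have E: "prob_space.expectation M (\<lambda>\<omega>. tanh (\<beta> * X \<omega> / \<sigma>\<^sup>2))
       = 1 - (\<integral>x. \<phi> x * g x \<partial>lborel)" .
  have "(\<integral>x. \<phi> x * g x \<partial>lborel) \<le> exp (- (min \<alpha> \<beta> * \<alpha>) / (2 * \<sigma>\<^sup>2))"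
  proof (cases "\<beta> \<le> \<alpha>")
    case True
    have "(\<integral>x. \<phi> x * g x \<partial>lborel) \<le> (\<integral>x. \<phi> x * exp (- c * x) \<partial>lborel)"
    proof (rule integral_mono[OF intg])
      show "integrable lborel (\<lambda>x. \<phi> x * exp (- c * x))"
        unfolding \<phi>_def by (rule nd_mgf(2)[OF s])
      fix x
      have "g x \<le> exp (- c * x)" unfolding g_def using g_le1[of "c * x"] by (simp add: mult_ac)
      then show "\<phi> x * g x \<le> \<phi> x * exp (- c * x)" unfolding \<phi>_def
        by (rule mult_left_mono) simp
    qed
    also have "\<dots> = exp (- c * \<alpha> + c\<^sup>2 * \<sigma>\<^sup>2 / 2)" unfolding \<phi>_def by (rule nd_mgf(1)[OF s])
    also have "\<dots> \<le> exp (- (min \<alpha> \<beta> * \<alpha>) / (2 * \<sigma>\<^sup>2))"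
    proof -
      have m: "min \<alpha> \<beta> = \<beta>" using True by simp
      have "\<beta> * \<beta> \<le> \<beta> * \<alpha>" using True b by simp
      then have "\<beta> * \<beta> * (\<sigma> * \<sigma>) \<le> \<beta> * \<alpha> * (\<sigma> * \<sigma>)"
        by (rule mult_right_mono) simp
      then have "- c * \<alpha> + c\<^sup>2 * \<sigma>\<^sup>2 / 2 \<le> - (\<beta> * \<alpha>) / (2 * \<sigma>\<^sup>2)"
        unfolding c_def using s2 s by (simp add: field_simps power2_eq_square mult_ac)
      then show ?thesis unfolding m by simp
    qed
    finally show ?thesis .
  next
    case False
    define r where "r = \<alpha> / \<sigma>\<^sup>2"
    have r: "r \<ge> 0" "r \<le> 2 * c" unfolding r_def c_def using False a s2
      by (auto simp: divide_right_mono)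
    have refl: "(\<integral>x. \<phi> x * g x \<partial>lborel) = (\<integral>x. \<phi> (- x) * g (- x) \<partial>lborel)"
      using lborel_integral_real_affine[of "-1" "\<lambda>x. \<phi> x * g x" 0] by simp
    have intg': "integrable lborel (\<lambda>x. \<phi> (- x) * g (- x))"
      using lborel_integrable_real_affine[OF intg, of "-1" 0] by simp
    have "2 * (\<integral>x. \<phi> x * g x \<partial>lborel)
        = (\<integral>x. \<phi> x * g x + \<phi> (- x) * g (- x) \<partial>lborel)"
      using intg intg' refl by (subst Bochner_Integration.integral_add) auto
    also have "\<dots> \<le> (\<integral>x. 2 * (\<phi> x * exp (- r * x)) \<partial>lborel)"
    proof (rule integral_mono)
      show "integrable lborel (\<lambda>x. \<phi> x * g x + \<phi> (- x) * g (- x))" using intg intg' by auto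
      show "integrable lborel (\<lambda>x. 2 * (\<phi> x * exp (- r * x)))"
        unfolding \<phi>_def using nd_mgf(2)[OF s] by auto
      fix x
      have "\<phi> x * g x + \<phi> (- x) * g (- x)
          = \<phi> x * (2 / (1 + exp (2 * c * x)) + exp (- 2 * r * x) * (2 / (1 + exp (2 * c * (- x)))))"
        unfolding \<phi>_def g_def r_def nd_reflect[OF s] by (simp add: algebra_simps)
      also have "\<dots> \<le> \<phi> x * (2 * exp (- r * x))"
        by (rule mult_left_mono[OF g_pair[OF r(2) r(1)]]) (simp add: \<phi>_def)
      finally show "\<phi> x * g x + \<phi> (- x) * g (- x) \<le> 2 * (\<phi> x * exp (- r * x))" by simp
    qed
    also have "\<dots> = 2 * exp (- r * \<alpha> + r\<^sup>2 * \<sigma>\<^sup>2 / 2)"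
      unfolding \<phi>_def using nd_mgf(1)[OF s, of \<alpha> r] by simp
    also have "- r * \<alpha> + r\<^sup>2 * \<sigma>\<^sup>2 / 2 = - (min \<alpha> \<beta> * \<alpha>) / (2 * \<sigma>\<^sup>2)"
    proof -
      have m: "min \<alpha> \<beta> = \<alpha>" using False by simp
      show ?thesis unfolding m r_def using s2 by (simp add: field_simps power2_eq_square)
    qed
    finally show ?thesis by simp
  qed
  then show ?thesis unfolding E by simp
qed

end
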